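(* Let $\lambda>0$ and let $\{a_n\}_{n\geq0}$ be a real sequence. Let $s^{(0)}_n=\sum_{j=0}^na_j$ and for $k\geq1$ let $s^{(k)}_n=\sum_{j=0}^ns^{(k-1)}_j$. Suppose that for some $k\geq0$: (i) $s^{(k)}_n\geq0$ for all $n\geq0$; (ii) $s^{(k)}_n/n^\lambda\to0$ as $n\to\infty$; (iii) $\sum_{n=1}^\infty s^{(k)}_n/n^{1+\lambda}<\infty$. Then the series $$f(x)=\sum_{n=0}^\infty\frac{a_n}{(x+n)^\lambda},\qquad x>0,$$ converges and $f$ is a generalized Stieltjes function of order $\lambda+k+1$. It has the representation $$f(x)=\int_0^\infty\frac{d\mu(t)}{(x+t)^{\lambda+k+1}}=\frac{1}{\Gamma(\lambda)}\int_0^\infty e^{-xt}t^{\lambda+k}\kappa(t)\,dt,$$ where $$d\mu(t)=\frac{(\lambda)_{k+1}}{k!}\sum_{n=0}^\infty a_n\chi_{(n,\infty)}(t)(t-n)^k\,dt$$ is a positive measure, and $$\kappa(t)=\frac{1}{t^{k+1}}\sum_{n=0}^\infty a_ne^{-nt}$$ is completely monotonic on $(0,\infty)$.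
   Context: For $\rho>0$, a generalized Stieltjes function of order $\rho$ is a function $F:(0,\infty)\to\mathbb R$ of the form $F(x)=\int_0^\infty\frac{d\mu(t)}{(x+t)^\rho}+c$ with $\mu$ a positive measure on $[0,\infty)$ making the integral converge for $x>0$ and $c\geq0$. $(\lambda)_{m}=\lambda(\lambda+1)\cdots(\lambda+m-1)$ is the Pochhammer symbol, $\chi_I$ the indicator function of $I$. A function is completely monotonic on $(0,\infty)$ if it is $C^\infty$ with $(-1)^mg^{(m)}\geq0$ for all $m\geq0$. *)

theory Defs
  imports "HOL-Analysis.Analysis"
begin

fun iter_psum :: "(nat \<Rightarrow> real) \<Rightarrow> nat \<Rightarrow> nat \<Rightarrow> real" where
  "iter_psum a 0 n = (\<Sum>j=0..n. a j)"
| "iter_psum a (Suc k) n = (\<Sum>j=0..n. iter_psum a k j)"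

definition gen_stieltjes :: "real \<Rightarrow> (real \<Rightarrow> real) \<Rightarrow> bool" where
  "gen_stieltjes \<rho> F \<longleftrightarrow>
     (\<exists>(\<mu>::real measure) c. sets \<mu> = sets borel \<and> emeasure \<mu> {..<0} = 0 \<and> c \<ge> 0 \<and>
        (\<forall>x>0. integrable \<mu> (\<lambda>t. 1 / (x + t) powr \<rho>) \<and>
               F x = (\<integral>t. 1 / (x + t) powr \<rho> \<partial>\<mu>) + c))"

definition completely_monotonic_on :: "real set \<Rightarrow> (real \<Rightarrow> real) \<Rightarrow> bool" where
  "completely_monotonic_on S g \<longleftrightarrow>
     (\<forall>m. \<forall>x\<in>S. ((deriv ^^ m) g) differentiable (at x)) \<and>
     (\<forall>m. \<forall>x\<in>S. (-1) ^ m * (deriv ^^ m) g x \<ge> 0)"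

end

theory Submission
  imports Defs
begin


definition tp :: "nat \<Rightarrow> real \<Rightarrow> real" where
  "tp k y = (if y > 0 then y ^ k / fact k else 0)"

definition nab :: "(real \<Rightarrow> real) \<Rightarrow> real \<Rightarrow> real" where
  "nab \<phi> y = \<phi> y - \<phi> (y - 1)"

definition Dk :: "nat \<Rightarrow> real \<Rightarrow> real" where
  "Dk k = (nab ^^ Suc k) (tp k)"

lemma nab_shift: "(nab ^^ n) (\<lambda>y. \<phi> (y - c)) y = (nab ^^ n) \<phi> (y - c)"
  by (induction n arbitrary: y) (auto simp: nab_def algebra_simps)

lemma nab_Suc: "(nab ^^ Suc n) \<phi> y = (nab ^^ n) \<phi> y - (nab ^^ n) \<phi> (y - 1)"
proof -
  have "(nab ^^ Suc n) \<phi> = (nab ^^ n) (nab \<phi>)" by (simp only: funpow_Suc_right comp_apply)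
  also have "\<dots> = (nab ^^ n) (\<lambda>y. \<phi> y - \<phi> (y - 1))" by (simp add: nab_def[abs_def])
  finally have "(nab ^^ Suc n) \<phi> y = (nab ^^ n) (\<lambda>y. \<phi> y - \<phi> (y - 1)) y" by simp
  moreover have "(nab ^^ n) (\<lambda>y. \<psi> y - \<zeta> y) y = (nab ^^ n) \<psi> y - (nab ^^ n) \<zeta> y" for \<psi> \<zeta>
    by (induction n arbitrary: y) (auto simp: nab_def)
  ultimately show ?thesis using nab_shift[of n \<phi> 1 y] by simp
qed

lemma nab_mult_y:
  "(nab ^^ Suc n) (\<lambda>y. y * \<phi> y) y = y * (nab ^^ Suc n) \<phi> y + real (Suc n) * (nab ^^ n) \<phi> (y - 1)"
proof (induction n arbitrary: y)
  case 0
  then show ?case by (simp add: nab_def algebra_simps)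
next
  case (Suc n)
  have "(nab ^^ Suc (Suc n)) (\<lambda>y. y * \<phi> y) y =
        (nab ^^ Suc n) (\<lambda>y. y * \<phi> y) y - (nab ^^ Suc n) (\<lambda>y. y * \<phi> y) (y - 1)"
    by (rule nab_Suc)
  also have "\<dots> = y * (nab ^^ Suc (Suc n)) \<phi> y + real (Suc (Suc n)) * (nab ^^ Suc n) \<phi> (y - 1)"
    unfolding Suc nab_Suc[of "Suc n" \<phi>] nab_Suc[of n \<phi>]
    by (simp add: algebra_simps)
  finally show ?case .
qed

lemma tp_Suc: "real (Suc k) * tp (Suc k) y = y * tp k y"
proof -
  have "real (Suc k) * (y ^ Suc k / fact (Suc k)) = y * (y ^ k / fact k)"
    by (simp add: fact_Suc divide_simps del: of_nat_Suc)
  then show ?thesis by (simp add: tp_def)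
qed

lemma Dk_rec: "real (Suc k) * Dk (Suc k) y = y * Dk k y + (real k + 2 - y) * Dk k (y - 1)"
proof -
  have "real (Suc k) * Dk (Suc k) y = (nab ^^ Suc (Suc k)) (\<lambda>y. real (Suc k) * tp (Suc k) y) y"
  proof -
    have "(nab ^^ n) (\<lambda>y. c * \<psi> y) y = c * (nab ^^ n) \<psi> y" for n c \<psi> y
      by (induction n arbitrary: y) (auto simp: nab_def algebra_simps)
    then show ?thesis unfolding Dk_def by (rule sym)
  qed
  also have "\<dots> = (nab ^^ Suc (Suc k)) (\<lambda>y. y * tp k y) y" by (simp only: tp_Suc)
  also have "\<dots> = y * Dk k y + (real k + 2 - y) * Dk k (y - 1)"
    unfolding nab_mult_y Dk_def nab_Suc[of "Suc k" "tp k" y]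
    by (simp add: algebra_simps)
  finally show ?thesis .
qed

lemma nab_tp_nonpos: "y \<le> 0 \<Longrightarrow> (nab ^^ n) (tp k) y = 0"
proof (induction n arbitrary: y)
  case 0 then show ?case by (simp add: tp_def)
next
  case (Suc n) then show ?case by (subst nab_Suc) (simp add: Suc.IH)
qed

lemma Dk_props: "Dk k y \<ge> 0 \<and> (y > real k + 1 \<longrightarrow> Dk k y = 0)"
proof (induction k arbitrary: y)
  case 0
  show ?case by (auto simp: Dk_def nab_def tp_def)
next
  case (Suc k)
  note IH = Suc
  show ?case
  proof (cases "y \<le> 0")
    case True
    have "Dk (Suc k) y = 0" unfolding Dk_def by (rule nab_tp_nonpos[OF True])
    then show ?thesis by simp
  next
    case False
    have r: "Dk (Suc k) y = (y * Dk k y + (real k + 2 - y) * Dk k (y - 1)) / real (Suc k)"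
      using Dk_rec[of k y] by (simp add: field_simps)
    show ?thesis
    proof (cases "y > real (Suc k) + 1")
      case True
      then show ?thesis using IH[of y] IH[of "y-1"] r by simp
    next
      case F2: False
      then show ?thesis using IH[of y] IH[of "y-1"] r False
        by (auto intro!: divide_nonneg_pos add_nonneg_nonneg mult_nonneg_nonneg)
    qed
  qed
qed

lemma tp_measurable[measurable]: "tp k \<in> borel_measurable borel"
  unfolding tp_def[abs_def] by measurable

lemma nab_measurable[measurable]:
  assumes [measurable]: "\<phi> \<in> borel_measurable borel"
  shows "(nab ^^ n) \<phi> \<in> borel_measurable borel"
proof (induction n)
  case 0 then show ?case by simp
next
  case (Suc n)
  note [measurable] = Suc
  have "(nab ^^ Suc n) \<phi> = (\<lambda>y. (nab ^^ n) \<phi> y - (nab ^^ n) \<phi> (y - 1))"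
    by (rule ext) (rule nab_Suc)
  then show ?case by simp
qed

lemma Dk_measurable[measurable]: "Dk k \<in> borel_measurable borel"
  unfolding Dk_def by measurable

lemma gamma_nn:
  fixes y p :: real assumes y: "y > 0" and p: "p > 0"
  shows "(\<integral>\<^sup>+u. ennreal (indicator {0<..} u * u powr (p - 1) * exp (- (y * u))) \<partial>lborel)
       = ennreal (Gamma p / y powr p)"
proof -
  let ?f = "\<lambda>u. ennreal (indicator {0<..} u * u powr (p - 1) * exp (- (y * u)))"
  have "(\<integral>\<^sup>+u. ?f u \<partial>lborel) = \<bar>1/y\<bar> * (\<integral>\<^sup>+x. ?f (0 + (1/y) * x) \<partial>lborel)"
    by (rule nn_integral_real_affine) (use y in auto)
  also have "(\<lambda>x. ?f (0 + (1/y) * x)) = (\<lambda>x. ennreal (y powr (1 - p)) *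
        ennreal (indicator {0..} x * x powr (p - 1) / exp x))"
  proof
    fix x :: real
    show "?f (0 + (1/y) * x) = ennreal (y powr (1 - p)) * ennreal (indicator {0..} x * x powr (p - 1) / exp x)"
    proof (cases "x > 0")
      case True
      have "(x / y) powr (p - 1) = y powr (1 - p) * x powr (p - 1)"
        using True y by (simp add: powr_divide powr_diff divide_simps)
      then show ?thesis using True y
        by (simp add: ennreal_mult'[symmetric] indicator_def exp_minus field_simps)
    next
      case False
      then show ?thesis using y by (cases "x = 0") (auto simp: indicator_def zero_less_divide_iff)
    qed
  qed
  also have "(\<integral>\<^sup>+x. ennreal (y powr (1 - p)) *
        ennreal (indicator {0..} x * x powr (p - 1) / exp x) \<partial>lborel)
      = ennreal (y powr (1 - p)) * Gamma p"
    by (subst nn_integral_cmult) (auto simp: Gamma_conv_nn_integral_real[OF p])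
  also have "ennreal \<bar>1/y\<bar> * (ennreal (y powr (1 - p)) * ennreal (Gamma p)) = ennreal (Gamma p / y powr p)"
    using y p Gamma_real_pos[OF p]
    by (simp add: ennreal_mult'[symmetric] powr_diff divide_simps)
  finally show ?thesis .
qed

lemma gamma_int:
  fixes y p :: real assumes y: "y > 0" and p: "p > 0"
  shows "integrable lborel (\<lambda>u. indicator {0<..} u * u powr (p - 1) * exp (- (y * u)))"
    and "(\<integral>u. indicator {0<..} u * u powr (p - 1) * exp (- (y * u)) \<partial>lborel) = Gamma p / y powr p"
proof -
  have "(\<integral>\<^sup>+u. ennreal (indicator {0<..} u * u powr (p - 1) * exp (- (y * u))) \<partial>lborel)
       = ennreal (Gamma p / y powr p)" by (rule gamma_nn[OF y p])
  then have "integrable lborel (\<lambda>u. indicator {0<..} u * u powr (p - 1) * exp (- (y * u))) \<and>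
      (\<integral>u. indicator {0<..} u * u powr (p - 1) * exp (- (y * u)) \<partial>lborel) = Gamma p / y powr p"
    by (subst (asm) nn_integral_eq_integrable)
       (auto simp: indicator_def intro!: divide_nonneg_nonneg Gamma_real_pos[OF p, THEN less_imp_le])
  then show "integrable lborel (\<lambda>u. indicator {0<..} u * u powr (p - 1) * exp (- (y * u)))"
    and "(\<integral>u. indicator {0<..} u * u powr (p - 1) * exp (- (y * u)) \<partial>lborel) = Gamma p / y powr p"
    by auto
qed

lemma laplace_nab:
  fixes t :: real assumes t: "t > 0"
  shows "integrable lborel (\<lambda>u. exp (- (u * t)) * (nab ^^ n) (tp k) u)
    \<and> (\<integral>u. exp (- (u * t)) * (nab ^^ n) (tp k) u \<partial>lborel) = (1 - exp (- t)) ^ n / t ^ Suc k"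
proof (induction n)
  case 0
  have eq: "(\<lambda>u. exp (- (u * t)) * (nab ^^ 0) (tp k) u) =
      (\<lambda>u. (1 / fact k) * (indicator {0<..} u * u powr (real (Suc k) - 1) * exp (- (t * u))))"
    by (auto simp: tp_def indicator_def powr_realpow mult.commute)
  have G: "Gamma (real (Suc k)) = fact k"
    using Gamma_fact[of k] by simp
  have P: "t powr (1 + real k) = t * t ^ k"
    using powr_realpow[OF t, of "Suc k"] by simp
  show ?case unfolding eq
    using gamma_int[OF t, of "real (Suc k)"] G t P
    by simp
next
  case (Suc n)
  define F where "F = (\<lambda>u. exp (- (u * t)) * (nab ^^ n) (tp k) u)"
  have Fi: "integrable lborel F" and FI: "integral\<^sup>L lborel F = (1 - exp (- t)) ^ n / t ^ Suc k"
    using Suc by (auto simp: F_def)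
  have Fi2: "integrable lborel (\<lambda>x. F (-1 + 1 * x))"
    by (rule lborel_integrable_real_affine[OF Fi]) simp
  have FI2: "integral\<^sup>L lborel F = integral\<^sup>L lborel (\<lambda>x. F (-1 + 1 * x))"
    using lborel_integral_real_affine[of 1 F "-1"] by simp
  have eq: "(\<lambda>u. exp (- (u * t)) * (nab ^^ Suc n) (tp k) u) =
      (\<lambda>u. F u - exp (- t) * F (-1 + 1 * u))"
  proof
    fix u
    have e: "exp (- t) * exp (- ((-1 + 1 * u) * t)) = exp (- (u * t))"
      by (simp add: exp_add[symmetric] algebra_simps)
    show "exp (- (u * t)) * (nab ^^ Suc n) (tp k) u = F u - exp (- t) * F (-1 + 1 * u)"
      unfolding nab_Suc F_def mult.assoc[symmetric] e by (simp add: algebra_simps)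
  qed
  show ?case unfolding eq
    using Fi Fi2 FI FI2 by (simp add: algebra_simps add_divide_distrib[symmetric])
qed


definition prevs :: "(nat \<Rightarrow> real) \<Rightarrow> nat \<Rightarrow> real" where
  "prevs f n = (if n = 0 then 0 else f (n - 1))"

definition sq :: "(nat \<Rightarrow> real) \<Rightarrow> nat \<Rightarrow> nat \<Rightarrow> real" where
  "sq a j = (if j = 0 then a else iter_psum a (j - 1))"

lemma sq_nabla: "sq a (Suc j) n - prevs (sq a (Suc j)) n = sq a j n"
proof (cases n)
  case 0 then show ?thesis by (cases j) (auto simp: sq_def prevs_def)
next
  case (Suc m)
  then show ?thesis by (cases j) (auto simp: sq_def prevs_def)
qed

lemma abel_fin:
  "(\<Sum>n<Suc N. (f n - prevs f n) * w n) = (\<Sum>n<Suc N. f n * (w n - w (Suc n))) + f N * w (Suc N)"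
  by (induction N) (auto simp: prevs_def algebra_simps)

lemma pow_fact_le_exp: "0 \<le> x \<Longrightarrow> x ^ n / fact n \<le> exp (x::real)"
proof -
  assume x: "0 \<le> x"
  have "sum (\<lambda>m. x ^ m /\<^sub>R fact m) {n} \<le> (\<Sum>m. x ^ m /\<^sub>R fact m)"
    by (rule sum_le_suminf) (use x summable_exp_generic[of x] in auto)
  then show ?thesis by (simp add: exp_def divide_inverse mult.commute)
qed

lemma pow_le_exp:
  fixes y a :: real assumes "y \<ge> 0" "a > 0"
  shows "y ^ m \<le> fact m / a ^ m * exp (a * y)"
proof -
  have "(a * y) ^ m / fact m \<le> exp (a * y)" using assms by (intro pow_fact_le_exp) auto
  then show ?thesis using assms by (simp add: power_mult_distrib field_simps)
qed

lemma powr_le_exp: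
  fixes y a p :: real assumes "y \<ge> 1" "a > 0"
  shows "y powr p \<le> fact (nat \<lceil>p\<rceil>) / a ^ (nat \<lceil>p\<rceil>) * exp (a * y)"
proof -
  have "y powr p \<le> y powr (real (nat \<lceil>p\<rceil>))"
    using assms real_nat_ceiling_ge[of p] by (intro powr_mono) auto
  also have "\<dots> = y ^ (nat \<lceil>p\<rceil>)" using assms by (simp add: powr_realpow)
  also have "\<dots> \<le> fact (nat \<lceil>p\<rceil>) / a ^ (nat \<lceil>p\<rceil>) * exp (a * y)"
    using assms by (intro pow_le_exp) auto
  finally show ?thesis .
qed

definition small :: "real \<Rightarrow> (nat \<Rightarrow> real) \<Rightarrow> bool" where
  "small lam F \<longleftrightarrow> (\<forall>e>0. \<exists>N0. \<forall>n\<ge>N0. \<bar>F n\<bar> \<le> e * (real n + 1) powr lam)"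

lemma small_diff:
  assumes "lam > 0" "small lam F"
  shows "small lam (\<lambda>n. F n - prevs F n)"
  unfolding small_def
proof (intro allI impI)
  fix e :: real assume e: "e > 0"
  obtain N0 where N0: "\<And>n. n \<ge> N0 \<Longrightarrow> \<bar>F n\<bar> \<le> e / 2 * (real n + 1) powr lam"
    using assms(2) e unfolding small_def by (meson half_gt_zero)
  show "\<exists>N0. \<forall>n\<ge>N0. \<bar>F n - prevs F n\<bar> \<le> e * (real n + 1) powr lam"
  proof (intro exI allI impI)
    fix n assume n: "n \<ge> Suc N0"
    then have p: "prevs F n = F (n - 1)" by (simp add: prevs_def)
    have "\<bar>F (n - 1)\<bar> \<le> e / 2 * (real (n - 1) + 1) powr lam" using n by (intro N0) auto
    also have "\<dots> \<le> e / 2 * (real n + 1) powr lam"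
      using e assms(1) n by (intro mult_left_mono powr_mono2) auto
    finally have "\<bar>F (n - 1)\<bar> \<le> e / 2 * (real n + 1) powr lam" .
    moreover have "\<bar>F n\<bar> \<le> e / 2 * (real n + 1) powr lam" using n by (intro N0) auto
    ultimately show "\<bar>F n - prevs F n\<bar> \<le> e * (real n + 1) powr lam" unfolding p by linarith
  qed
qed

lemma small_tendsto:
  assumes "small lam F" and c: "\<And>N. \<bar>w (Suc N)\<bar> * (real N + 1) powr lam \<le> c"
  shows "(\<lambda>N. F N * w (Suc N)) \<longlonglongrightarrow> 0"
proof (rule LIMSEQ_I)
  fix r :: real assume r: "r > 0"
  have c0: "c \<ge> 0" using c[of 0] by (smt (verit) abs_ge_zero mult_nonneg_nonneg powr_ge_zero)
  define e where "e = r / (c + 1)"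
  have e: "e > 0" using r c0 by (simp add: e_def)
  obtain N0 where N0: "\<And>n. n \<ge> N0 \<Longrightarrow> \<bar>F n\<bar> \<le> e * (real n + 1) powr lam"
    using assms(1) e unfolding small_def by blast
  show "\<exists>no. \<forall>n\<ge>no. norm (F n * w (Suc n) - 0) < r"
  proof (intro exI allI impI)
    fix n assume n: "n \<ge> N0"
    have "\<bar>F n * w (Suc n)\<bar> = \<bar>F n\<bar> * \<bar>w (Suc n)\<bar>" by (simp add: abs_mult)
    also have "\<dots> \<le> e * (real n + 1) powr lam * \<bar>w (Suc n)\<bar>"
      using N0[OF n] by (intro mult_right_mono) auto
    also have "\<dots> = e * (\<bar>w (Suc n)\<bar> * (real n + 1) powr lam)" by simp
    also have "\<dots> \<le> e * c" using e c[of n] by (intro mult_left_mono) auto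
    also have "\<dots> < r" using r c0 by (simp add: e_def field_simps)
    finally show "norm (F n * w (Suc n) - 0) < r" by simp
  qed
qed

lemma abel_sums:
  assumes "summable (\<lambda>n. F n * (w n - w (Suc n)))"
    and "(\<lambda>N. F N * w (Suc N)) \<longlonglongrightarrow> 0"
  shows "(\<lambda>n. (F n - prevs F n) * w n) sums (\<Sum>n. F n * (w n - w (Suc n)))"
proof -
  have "(\<lambda>N. (\<Sum>n<Suc N. F n * (w n - w (Suc n))) + F N * w (Suc N)) \<longlonglongrightarrow> (\<Sum>n. F n * (w n - w (Suc n))) + 0"
    using assms(1)[THEN summable_LIMSEQ, THEN LIMSEQ_Suc] assms(2) by (intro tendsto_add)
  moreover have "(\<lambda>N. (\<Sum>n<Suc N. (F n - prevs F n) * w n)) = (\<lambda>N. (\<Sum>n<Suc N. F n * (w n - w (Suc n))) + F N * w (Suc N))"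
    by (rule ext, rule abel_fin)
  ultimately have "(\<lambda>N. (\<Sum>n<Suc N. (F n - prevs F n) * w n)) \<longlonglongrightarrow> (\<Sum>n. F n * (w n - w (Suc n)))"
    by simp
  then show ?thesis unfolding sums_def by (rule LIMSEQ_imp_Suc)
qed

lemma level_descent:
  fixes W :: "nat \<Rightarrow> nat \<Rightarrow> real" and K :: nat
  assumes rec: "\<And>j n. j < K \<Longrightarrow> W (Suc j) n = W j n - W j (Suc n)"
    and bd: "\<And>j. j < K \<Longrightarrow> (\<lambda>N. sq a (Suc j) N * W j (Suc N)) \<longlonglongrightarrow> 0"
    and top: "summable (\<lambda>n. sq a K n * W K n)"
  shows "d \<le> K \<Longrightarrow> (\<lambda>n. sq a (K - d) n * W (K - d) n) sums (\<Sum>n. sq a K n * W K n)"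
proof (induction d)
  case 0 then show ?case using top by (simp add: summable_sums)
next
  case (Suc d)
  define j where "j = K - Suc d"
  have jK: "j < K" and sj: "Suc j = K - d" using Suc.prems by (auto simp: j_def)
  have IH: "(\<lambda>n. sq a (Suc j) n * (W j n - W j (Suc n))) sums (\<Sum>n. sq a K n * W K n)"
    using Suc.IH Suc.prems rec[OF jK] sj by (simp add: sums_iff)
  have "(\<lambda>n. (sq a (Suc j) n - prevs (sq a (Suc j)) n) * W j n) sums (\<Sum>n. sq a (Suc j) n * (W j n - W j (Suc n)))"
    by (rule abel_sums) (use IH bd[OF jK] in \<open>auto simp: sums_iff\<close>)
  then show ?case using IH unfolding sq_nabla by (simp add: sums_iff j_def)
qed

lemma iter_level:
  assumes "\<And>j. (nab ^^ j) \<Phi> (t - real (Suc N)) = 0"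
  shows "(\<Sum>n<Suc N. a n * \<Phi> (t - real n)) = (\<Sum>n<Suc N. iter_psum a i n * (nab ^^ Suc i) \<Phi> (t - real n))"
proof (induction i)
  case 0
  have "(\<Sum>n<Suc N. a n * \<Phi> (t - real n)) = (\<Sum>n<Suc N. (sq a 1 n - prevs (sq a 1) n) * \<Phi> (t - real n))"
    using sq_nabla[of a 0] by (simp add: sq_def)
  also have "\<dots> = (\<Sum>n<Suc N. sq a 1 n * (\<Phi> (t - real n) - \<Phi> (t - real (Suc n)))) + sq a 1 N * \<Phi> (t - real (Suc N))"
    by (rule abel_fin)
  also have "\<dots> = (\<Sum>n<Suc N. iter_psum a 0 n * (nab ^^ Suc 0) \<Phi> (t - real n))"
    using assms[of 0] by (simp add: sq_def nab_def algebra_simps)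
  finally show ?case .
next
  case (Suc i)
  let ?P = "(nab ^^ Suc i) \<Phi>"
  have "(\<Sum>n<Suc N. iter_psum a i n * ?P (t - real n)) = (\<Sum>n<Suc N. (sq a (Suc (Suc i)) n - prevs (sq a (Suc (Suc i))) n) * ?P (t - real n))"
    using sq_nabla[of a "Suc i"] by (simp add: sq_def)
  also have "\<dots> = (\<Sum>n<Suc N. sq a (Suc (Suc i)) n * (?P (t - real n) - ?P (t - real (Suc n)))) + sq a (Suc (Suc i)) N * ?P (t - real (Suc N))"
    by (rule abel_fin)
  also have "\<dots> = (\<Sum>n<Suc N. iter_psum a (Suc i) n * (nab ^^ Suc (Suc i)) \<Phi> (t - real n))"
  proof -
    have "?P (t - real (Suc N)) = 0" by (rule assms)
    moreover have "(nab ^^ Suc (Suc i)) \<Phi> (t - real n) = ?P (t - real n) - ?P (t - real (Suc n))" for n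
      by (subst nab_Suc) (simp add: algebra_simps)
    ultimately show ?thesis by (simp add: sq_def)
  qed
  finally show ?case using Suc.IH by simp
qed


locale P6 =
  fixes lam :: real and a :: "nat \<Rightarrow> real" and k :: nat
  assumes lam_pos: "lam > 0"
    and nonneg: "\<forall>n. iter_psum a k n \<ge> 0"
    and lim: "(\<lambda>n. iter_psum a k n / real n powr lam) \<longlonglongrightarrow> 0"
    and summ: "summable (\<lambda>n. iter_psum a k (Suc n) / real (Suc n) powr (1 + lam))"
begin

abbreviation "S \<equiv> iter_psum a k"

lemma sqK: "sq a (Suc k) = S" by (simp add: sq_def)

lemma small_S: "small lam S"
  unfolding small_def
proof (intro allI impI)
  fix e :: real assume e: "e > 0"
  obtain N0 where N0: "\<And>n. n \<ge> N0 \<Longrightarrow> \<bar>S n / real n powr lam - 0\<bar> < e"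
    using LIMSEQ_D[OF lim e] by auto
  show "\<exists>N0. \<forall>n\<ge>N0. \<bar>S n\<bar> \<le> e * (real n + 1) powr lam"
  proof (intro exI allI impI)
    fix n assume n: "n \<ge> Suc N0"
    then have pos: "real n powr lam > 0" by simp
    have "\<bar>S n\<bar> / real n powr lam < e" using N0[of n] n pos by (simp add: abs_divide)
    then have "\<bar>S n\<bar> \<le> e * real n powr lam" using pos by (simp add: divide_less_eq)
    also have "\<dots> \<le> e * (real n + 1) powr lam"
      using e lam_pos by (intro mult_left_mono powr_mono2) auto
    finally show "\<bar>S n\<bar> \<le> e * (real n + 1) powr lam" .
  qed
qed

lemma small_iter: "i \<le> k \<Longrightarrow> small lam (iter_psum a i)"
proof -
  have "d \<le> k \<Longrightarrow> small lam (iter_psum a (k - d))" for d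
  proof (induction d)
    case 0 then show ?case using small_S by simp
  next
    case (Suc d)
    define i where "i = k - Suc d"
    have si: "Suc i = k - d" using Suc.prems by (simp add: i_def)
    have "small lam (\<lambda>n. iter_psum a (Suc i) n - prevs (iter_psum a (Suc i)) n)"
      using Suc si by (intro small_diff lam_pos) auto
    moreover have "(\<lambda>n. iter_psum a (Suc i) n - prevs (iter_psum a (Suc i)) n) = iter_psum a i"
      using sq_nabla[of a "Suc i"] by (auto simp: sq_def)
    ultimately show ?case by (simp add: i_def)
  qed
  from this[of "k - i"] show "i \<le> k \<Longrightarrow> small lam (iter_psum a i)" by simp
qed

lemma small_sq: "j < Suc k \<Longrightarrow> small lam (sq a (Suc j))"
  using small_iter[of j] by (simp add: sq_def)

lemma S_bound: "\<exists>C>0. \<forall>n. S n \<le> C * (real n + 1) powr lam"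
proof -
  obtain N0 where N0: "\<And>n. n \<ge> N0 \<Longrightarrow> \<bar>S n\<bar> \<le> 1 * (real n + 1) powr lam"
    using small_S unfolding small_def by (meson zero_less_one)
  define C where "C = 1 + (\<Sum>n<N0. \<bar>S n\<bar>)"
  have C: "C > 0" unfolding C_def by (smt (verit) sum_nonneg abs_ge_zero)
  have "S n \<le> C * (real n + 1) powr lam" for n
  proof (cases "n \<ge> N0")
    case True
    have "S n \<le> 1 * (real n + 1) powr lam" using N0[OF True] by simp
    also have "\<dots> \<le> C * (real n + 1) powr lam"
      by (intro mult_right_mono) (auto simp: C_def sum_nonneg)
    finally show ?thesis .
  next
    case False
    have "S n \<le> \<bar>S n\<bar>" by simp
    also have "\<bar>S n\<bar> \<le> (\<Sum>n<N0. \<bar>S n\<bar>)"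
      by (rule member_le_sum[of n "{..<N0}" "\<lambda>n. \<bar>S n\<bar>"]) (use False in auto)
    also have "\<dots> \<le> C * 1" by (simp add: C_def)
    also have "\<dots> \<le> C * (real n + 1) powr lam"
      using C lam_pos by (intro mult_left_mono ge_one_powr_ge_zero) auto
    finally show ?thesis .
  qed
  with C show ?thesis by blast
qed

lemma gen_fun:
  fixes t :: real assumes t: "t > 0"
  shows "summable (\<lambda>n. S n * exp (- t) ^ n)"
    and "(\<lambda>n. a n * exp (- t) ^ n) sums ((1 - exp (- t)) ^ Suc k * (\<Sum>n. S n * exp (- t) ^ n))"
proof -
  define z where "z = exp (- t)"
  have z0: "z > 0" and z1: "z < 1" using t by (auto simp: z_def)
  obtain C where C: "C > 0" "\<And>n. S n \<le> C * (real n + 1) powr lam" using S_bound by blast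
  define m where "m = nat \<lceil>lam\<rceil>"
  have zpow: "z ^ n = exp (- (t * real n))" for n
    by (simp add: z_def exp_of_nat_mult[symmetric] mult.commute)
  show sumS: "summable (\<lambda>n. S n * z ^ n)"
  proof (rule summable_comparison_test')
    show "summable (\<lambda>n. C * (fact m / (t/2) ^ m * exp (t/2)) * exp (- (t/2)) ^ n)"
      using t by (intro summable_mult summable_geometric) auto
    fix n
    have "(real n + 1) powr lam \<le> fact m / (t/2) ^ m * exp (t/2 * (real n + 1))"
      unfolding m_def using t by (intro powr_le_exp) auto
    then have "(real n + 1) powr lam * z ^ n \<le> fact m / (t/2) ^ m * exp (t/2 * (real n + 1)) * exp (- (t * real n))"
      unfolding zpow by (intro mult_right_mono) auto
    also have "\<dots> = fact m / (t/2) ^ m * exp (t/2) * exp (- (t/2)) ^ n"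
    proof -
      have "exp (t/2 * (real n + 1)) * exp (- (t * real n)) = exp (t/2 * (real n + 1) + - (t * real n))"
        by (rule mult_exp_exp)
      also have "\<dots> = exp (t/2 + real n * (- (t/2)))"
        by (rule arg_cong[where f=exp]) (simp add: field_simps)
      also have "\<dots> = exp (t/2) * exp (- (t/2)) ^ n"
        by (simp only: exp_add exp_of_nat_mult)
      finally show ?thesis by simp
    qed
    finally have key: "(real n + 1) powr lam * z ^ n \<le> fact m / (t/2) ^ m * exp (t/2) * exp (- (t/2)) ^ n" .
    then have "S n * z ^ n \<le> C * (fact m / (t/2) ^ m * exp (t/2) * exp (- (t/2)) ^ n)"
    proof -
      have "S n * z ^ n \<le> C * (real n + 1) powr lam * z ^ n"
        using C(2)[of n] z0 by (intro mult_right_mono) auto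
      also have "\<dots> \<le> C * (fact m / (t/2) ^ m * exp (t/2) * exp (- (t/2)) ^ n)"
        using mult_left_mono[OF key, of C] C(1) by (simp add: mult.assoc)
      finally show ?thesis .
    qed
    then show "norm (S n * z ^ n) \<le> C * (fact m / (t/2) ^ m * exp (t/2)) * exp (- (t/2)) ^ n"
      using nonneg z0 by (simp add: mult.assoc)
  qed
  define W where "W = (\<lambda>j n. z ^ n * (1 - z) ^ j)"
  have "(\<lambda>n. sq a (Suc k - Suc k) n * W (Suc k - Suc k) n) sums (\<Sum>n. sq a (Suc k) n * W (Suc k) n)"
  proof (rule level_descent)
    show "W (Suc j) n = W j n - W j (Suc n)" for j n by (simp add: W_def algebra_simps)
    show "summable (\<lambda>n. sq a (Suc k) n * W (Suc k) n)"
      unfolding sqK W_def using summable_mult2[OF sumS, of "(1 - z) ^ Suc k"]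
      by (simp add: mult.assoc)
    fix j assume j: "j < Suc k"
    show "(\<lambda>N. sq a (Suc j) N * W j (Suc N)) \<longlonglongrightarrow> 0"
    proof (rule small_tendsto[OF small_sq[OF j]])
      fix N
      have "\<bar>W j (Suc N)\<bar> * (real N + 1) powr lam \<le> z ^ Suc N * (real N + 1) powr lam"
        using z0 z1 by (auto simp: W_def abs_mult intro!: mult_right_mono mult_left_le power_le_one)
      also have "\<dots> \<le> exp (- (t * (real N + 1))) * (fact m / t ^ m * exp (t * (real N + 1)))"
      proof -
        have e1: "z ^ Suc N = exp (- (t * (real N + 1)))" unfolding zpow by simp
        show ?thesis unfolding e1 m_def using t powr_le_exp[of "real N + 1" t lam] by (intro mult_left_mono) auto
      qed
      also have "\<dots> = fact m / t ^ m * (exp (- (t * (real N + 1))) * exp (t * (real N + 1)))"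
        by (simp only: mult_ac)
      also have "\<dots> = fact m / t ^ m"
        using exp_minus_inverse[of "t * (real N + 1)"] by (simp add: mult.commute)
      finally show "\<bar>W j (Suc N)\<bar> * (real N + 1) powr lam \<le> fact m / t ^ m" .
    qed
  qed simp
  moreover have "(\<Sum>n. sq a (Suc k) n * W (Suc k) n) = (1 - z) ^ Suc k * (\<Sum>n. S n * z ^ n)"
  proof -
    have "(\<Sum>n. sq a (Suc k) n * W (Suc k) n) = (\<Sum>n. (1 - z) ^ Suc k * (S n * z ^ n))"
      unfolding sqK W_def by (simp only: mult_ac)
    also have "\<dots> = (1 - z) ^ Suc k * (\<Sum>n. S n * z ^ n)"
      by (rule suminf_mult[OF sumS])
    finally show ?thesis .
  qed
  moreover have "(\<lambda>n. sq a (Suc k - Suc k) n * W (Suc k - Suc k) n) = (\<lambda>n. a n * z ^ n)"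
    by (simp add: sq_def W_def)
  ultimately show "(\<lambda>n. a n * z ^ n) sums ((1 - z) ^ Suc k * (\<Sum>n. S n * z ^ n))"
    by simp
qed

end


definition WW :: "real \<Rightarrow> real \<Rightarrow> nat \<Rightarrow> nat \<Rightarrow> real" where
  "WW lam x j n = (\<integral>t. indicator {0<..} t * t powr (lam - 1) * exp (- ((x + real n) * t)) * (1 - exp (- t)) ^ j \<partial>lborel) / Gamma lam"

lemma WW_integrable:
  fixes lam x :: real assumes "lam > 0" "x > 0"
  shows "integrable lborel (\<lambda>t. indicator {0<..} t * t powr (lam - 1) * exp (- ((x + real n) * t)) * (1 - exp (- t)) ^ j)"
proof (rule Bochner_Integration.integrable_bound)
  show "integrable lborel (\<lambda>t. indicator {0<..} t * t powr (lam - 1) * exp (- ((x + real n) * t)))"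
    using assms by (intro gamma_int) auto
  show "AE t in lborel. norm (indicator {0<..} t * t powr (lam - 1) * exp (- ((x + real n) * t)) * (1 - exp (- t)) ^ j)
      \<le> norm (indicator {0<..} t * t powr (lam - 1) * exp (- ((x + real n) * t)))"
  proof (intro AE_I2)
    fix t :: real
    show "norm (indicator {0<..} t * t powr (lam - 1) * exp (- ((x + real n) * t)) * (1 - exp (- t)) ^ j)
      \<le> norm (indicator {0<..} t * t powr (lam - 1) * exp (- ((x + real n) * t)))"
    proof (cases "t > 0")
      case True
      have "\<bar>1 - exp (- t)\<bar> ^ j \<le> 1" using True by (intro power_le_one) auto
      then show ?thesis using True by (simp add: abs_mult power_abs mult_left_le)
    qed simp
  qed
qed measurable

lemma WW_nonneg_le:
  fixes lam x :: real assumes "lam > 0" "x > 0"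
  shows "0 \<le> WW lam x j n" "WW lam x j n \<le> (x + real n) powr (- lam)"
proof -
  have G: "Gamma lam > 0" using assms by (simp add: Gamma_real_pos)
  have I: "0 \<le> (\<integral>t. indicator {0<..} t * t powr (lam - 1) * exp (- ((x + real n) * t)) * (1 - exp (- t)) ^ j \<partial>lborel)"
    by (intro integral_nonneg_AE AE_I2) (auto simp: indicator_def)
  then show "0 \<le> WW lam x j n" using G by (simp add: WW_def)
  have "(\<integral>t. indicator {0<..} t * t powr (lam - 1) * exp (- ((x + real n) * t)) * (1 - exp (- t)) ^ j \<partial>lborel)
      \<le> (\<integral>t. indicator {0<..} t * t powr (lam - 1) * exp (- ((x + real n) * t)) \<partial>lborel)"
  proof (intro integral_mono WW_integrable assms)
    show "integrable lborel (\<lambda>t. indicator {0<..} t * t powr (lam - 1) * exp (- ((x + real n) * t)))"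
      using assms by (intro gamma_int) auto
    fix t :: real
    show "indicator {0<..} t * t powr (lam - 1) * exp (- ((x + real n) * t)) * (1 - exp (- t)) ^ j
      \<le> indicator {0<..} t * t powr (lam - 1) * exp (- ((x + real n) * t))"
    proof (cases "t > 0")
      case True
      have "(1 - exp (- t)) ^ j \<le> 1" using True by (intro power_le_one) auto
      then show ?thesis using True by (simp add: mult_left_le)
    qed simp
  qed
  also have "\<dots> = Gamma lam / (x + real n) powr lam"
    using assms by (intro gamma_int) auto
  finally show "WW lam x j n \<le> (x + real n) powr (- lam)"
    using G by (simp add: WW_def divide_right_mono powr_minus_divide field_simps)
qed

lemma WW_0:
  fixes lam x :: real assumes "lam > 0" "x > 0"
  shows "WW lam x 0 n = (x + real n) powr (- lam)"
proof -
  have G: "Gamma lam > 0" using assms by (simp add: Gamma_real_pos)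
  have "(\<integral>t. indicator {0<..} t * t powr (lam - 1) * exp (- ((x + real n) * t)) \<partial>lborel) = Gamma lam / (x + real n) powr lam"
    using assms by (intro gamma_int) auto
  then show ?thesis using G by (simp add: WW_def powr_minus_divide)
qed

lemma WW_rec:
  fixes lam x :: real assumes "lam > 0" "x > 0"
  shows "WW lam x (Suc j) n = WW lam x j n - WW lam x j (Suc n)"
proof -
  have eq: "(\<lambda>t. indicator {0<..} t * t powr (lam - 1) * exp (- ((x + real n) * t)) * (1 - exp (- t)) ^ Suc j)
    = (\<lambda>t. indicator {0<..} t * t powr (lam - 1) * exp (- ((x + real n) * t)) * (1 - exp (- t)) ^ j
        - indicator {0<..} t * t powr (lam - 1) * exp (- ((x + real (Suc n)) * t)) * (1 - exp (- t)) ^ j)"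
  proof
    fix t :: real
    have "exp (- ((x + real (Suc n)) * t)) = exp (- ((x + real n) * t)) * exp (- t)"
      by (simp add: mult_exp_exp algebra_simps)
    then show "indicator {0<..} t * t powr (lam - 1) * exp (- ((x + real n) * t)) * (1 - exp (- t)) ^ Suc j
      = indicator {0<..} t * t powr (lam - 1) * exp (- ((x + real n) * t)) * (1 - exp (- t)) ^ j
        - indicator {0<..} t * t powr (lam - 1) * exp (- ((x + real (Suc n)) * t)) * (1 - exp (- t)) ^ j"
      by (simp add: algebra_simps)
  qed
  have i1: "integrable lborel (\<lambda>t. indicator {0<..} t * t powr (lam - 1) * exp (- ((x + real n) * t)) * (1 - exp (- t)) ^ j)"
    by (rule WW_integrable[OF assms])
  have i2: "integrable lborel (\<lambda>t. indicator {0<..} t * t powr (lam - 1) * exp (- ((x + real (Suc n)) * t)) * (1 - exp (- t)) ^ j)"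
    by (rule WW_integrable[OF assms])
  show ?thesis unfolding WW_def eq Bochner_Integration.integral_diff[OF i1 i2] by (rule diff_divide_distrib)
qed

lemma WW_top:
  fixes lam x :: real assumes "lam > 0" "x > 0"
  shows "WW lam x K n \<le> Gamma (lam + real K) / Gamma lam * (x + real n) powr (- (lam + real K))"
proof -
  have G: "Gamma lam > 0" using assms by (simp add: Gamma_real_pos)
  have "(\<integral>t. indicator {0<..} t * t powr (lam - 1) * exp (- ((x + real n) * t)) * (1 - exp (- t)) ^ K \<partial>lborel)
      \<le> (\<integral>t. indicator {0<..} t * t powr (lam + real K - 1) * exp (- ((x + real n) * t)) \<partial>lborel)"
  proof (intro integral_mono WW_integrable assms)
    show "integrable lborel (\<lambda>t. indicator {0<..} t * t powr (lam + real K - 1) * exp (- ((x + real n) * t)))"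
      using assms by (intro gamma_int) auto
    fix t :: real
    show "indicator {0<..} t * t powr (lam - 1) * exp (- ((x + real n) * t)) * (1 - exp (- t)) ^ K
      \<le> indicator {0<..} t * t powr (lam + real K - 1) * exp (- ((x + real n) * t))"
    proof (cases "t > 0")
      case True
      have "(1 - exp (- t)) ^ K \<le> t ^ K"
        using True exp_ge_add_one_self[of "- t"] by (intro power_mono) auto
      moreover have "t powr (lam + real K - 1) = t powr (lam - 1) * t ^ K"
        using True by (simp add: powr_add[symmetric] powr_realpow[symmetric] algebra_simps)
      ultimately show ?thesis using True
        by (simp add: mult.commute mult.left_commute mult_left_mono)
    qed simp
  qed
  also have "\<dots> = Gamma (lam + real K) / (x + real n) powr (lam + real K)"
    using assms by (intro gamma_int) auto
  finally have I: "(\<integral>t. indicator {0<..} t * t powr (lam - 1) * exp (- ((x + real n) * t)) * (1 - exp (- t)) ^ K \<partial>lborel)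
      \<le> Gamma (lam + real K) / (x + real n) powr (lam + real K)" .
  have "WW lam x K n \<le> (Gamma (lam + real K) / (x + real n) powr (lam + real K)) / Gamma lam"
    unfolding WW_def using I G by (intro divide_right_mono) auto
  also have "\<dots> = Gamma (lam + real K) / Gamma lam * (x + real n) powr (- (lam + real K))"
    by (simp only: powr_minus) (simp add: field_simps)
  finally show ?thesis .
qed


context P6 begin

lemma S_nonneg: "S n \<ge> 0" using nonneg by simp

lemma summable_top:
  assumes x: "x > 0"
  shows "summable (\<lambda>n. S n * WW lam x (Suc k) n)"
proof -
  define c where "c = Gamma (lam + real (Suc k)) / Gamma lam"
  have c: "c > 0" using lam_pos by (simp add: c_def Gamma_real_pos)
  have "summable (\<lambda>n. c * (S (Suc n) / real (Suc n) powr (1 + lam)))"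
    using summ by (rule summable_mult)
  then have "summable (\<lambda>n. S (Suc n) * WW lam x (Suc k) (Suc n))"
  proof (rule summable_comparison_test')
    fix n
    have "(x + real (Suc n)) powr (- (lam + real (Suc k))) \<le> real (Suc n) powr (- (lam + real (Suc k)))"
      using x lam_pos by (intro powr_mono2') auto
    also have "\<dots> \<le> real (Suc n) powr (- (1 + lam))"
      by (intro powr_mono) auto
    also have "\<dots> = 1 / real (Suc n) powr (1 + lam)" by (rule powr_minus_divide)
    finally have b: "(x + real (Suc n)) powr (- (lam + real (Suc k))) \<le> 1 / real (Suc n) powr (1 + lam)" .
    have "S (Suc n) * WW lam x (Suc k) (Suc n) \<le> S (Suc n) * (c * (x + real (Suc n)) powr (- (lam + real (Suc k))))"
      using WW_top[OF lam_pos x, of "Suc k" "Suc n"] S_nonneg by (intro mult_left_mono) (auto simp: c_def)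
    also have "\<dots> \<le> S (Suc n) * (c * (1 / real (Suc n) powr (1 + lam)))"
      using b c S_nonneg[of "Suc n"] by (intro mult_left_mono) auto
    also have "S (Suc n) * (c * (1 / real (Suc n) powr (1 + lam))) = c * (S (Suc n) / real (Suc n) powr (1 + lam))"
      by simp
    finally have F: "S (Suc n) * WW lam x (Suc k) (Suc n) \<le> c * (S (Suc n) / real (Suc n) powr (1 + lam))" .
    have "norm (S (Suc n) * WW lam x (Suc k) (Suc n)) = S (Suc n) * WW lam x (Suc k) (Suc n)"
      using S_nonneg[of "Suc n"] WW_nonneg_le(1)[OF lam_pos x, of "Suc k" "Suc n"] by simp
    then show "norm (S (Suc n) * WW lam x (Suc k) (Suc n)) \<le> c * (S (Suc n) / real (Suc n) powr (1 + lam))"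
      using F by simp
  qed
  then show ?thesis using summable_Suc_iff[of "\<lambda>n. S n * WW lam x (Suc k) n"] by simp
qed

lemma f_sums:
  assumes x: "x > 0"
  shows "(\<lambda>n. a n / (x + real n) powr lam) sums (\<Sum>n. S n * WW lam x (Suc k) n)"
proof -
  have "(\<lambda>n. sq a (Suc k - Suc k) n * WW lam x (Suc k - Suc k) n) sums (\<Sum>n. sq a (Suc k) n * WW lam x (Suc k) n)"
  proof (rule level_descent)
    show "WW lam x (Suc j) n = WW lam x j n - WW lam x j (Suc n)" for j n
      by (rule WW_rec[OF lam_pos x])
    show "summable (\<lambda>n. sq a (Suc k) n * WW lam x (Suc k) n)"
      unfolding sqK by (rule summable_top[OF x])
    fix j assume j: "j < Suc k"
    show "(\<lambda>N. sq a (Suc j) N * WW lam x j (Suc N)) \<longlonglongrightarrow> 0"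
    proof (rule small_tendsto[OF small_sq[OF j]])
      fix N
      have "\<bar>WW lam x j (Suc N)\<bar> * (real N + 1) powr lam \<le> (x + real (Suc N)) powr (- lam) * (real N + 1) powr lam"
        using WW_nonneg_le[OF lam_pos x, of j "Suc N"] by (intro mult_right_mono) auto
      also have "\<dots> \<le> (real N + 1) powr (- lam) * (real N + 1) powr lam"
        using x lam_pos by (intro mult_right_mono powr_mono2') auto
      also have "\<dots> = 1" by (simp add: powr_add[symmetric])
      finally show "\<bar>WW lam x j (Suc N)\<bar> * (real N + 1) powr lam \<le> 1" .
    qed
  qed simp
  then show ?thesis
    using x by (simp add: sqK sq_def WW_0[OF lam_pos x] powr_minus_divide)
qed

definition "kap t = (\<Sum>n. a n * exp (- real n * t)) / t ^ (k + 1)"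

lemma A_eq:
  assumes t: "t > 0"
  shows "(\<Sum>n. a n * exp (- real n * t)) = (1 - exp (- t)) ^ Suc k * (\<Sum>n. S n * exp (- t) ^ n)"
    and "summable (\<lambda>n. a n * exp (- real n * t))"
proof -
  have e: "exp (- real n * t) = exp (- t) ^ n" for n
    by (simp add: exp_of_nat_mult[symmetric])
  show "(\<Sum>n. a n * exp (- real n * t)) = (1 - exp (- t)) ^ Suc k * (\<Sum>n. S n * exp (- t) ^ n)"
    "summable (\<lambda>n. a n * exp (- real n * t))"
    unfolding e using gen_fun(2)[OF t] by (auto simp: sums_iff)
qed

lemma kap_nonneg: "t > 0 \<Longrightarrow> kap t \<ge> 0"
  unfolding kap_def using A_eq(1)[of t] S_nonneg gen_fun(1)[of t]
  by (auto intro!: divide_nonneg_pos mult_nonneg_nonneg suminf_nonneg)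

lemma laplace_f:
  assumes x: "x > 0"
  shows "integrable lborel (\<lambda>t. indicator {0<..} t * (exp (- x * t) * t powr (lam + real k) * kap t))"
    and "(\<integral>t. indicator {0<..} t * (exp (- x * t) * t powr (lam + real k) * kap t) \<partial>lborel)
         = Gamma lam * (\<Sum>n. S n * WW lam x (Suc k) n)"
proof -
  define h where "h = (\<lambda>n t. S n * (indicator {0<..} t * t powr (lam - 1) * exp (- ((x + real n) * t)) * (1 - exp (- t)) ^ Suc k))"
  have hint: "integrable lborel (h n)" for n
    unfolding h_def by (intro integrable_mult_right WW_integrable lam_pos x)
  have hnn: "h n t \<ge> 0" for n t
    unfolding h_def using S_nonneg by (auto simp: indicator_def intro!: mult_nonneg_nonneg)
  have hI: "(\<integral>t. norm (h n t) \<partial>lborel) = Gamma lam * (S n * WW lam x (Suc k) n)" for n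
  proof -
    have "(\<integral>t. norm (h n t) \<partial>lborel) = (\<integral>t. h n t \<partial>lborel)" using hnn by simp
    also have "\<dots> = S n * (\<integral>t. indicator {0<..} t * t powr (lam - 1) * exp (- ((x + real n) * t)) * (1 - exp (- t)) ^ Suc k \<partial>lborel)"
      unfolding h_def by (rule integral_mult_right_zero)
    also have "\<dots> = S n * (Gamma lam * WW lam x (Suc k) n)"
      unfolding WW_def using Gamma_real_pos[OF lam_pos] by simp
    finally show ?thesis by simp
  qed
  have eq: "indicator {0<..} t * (exp (- x * t) * t powr (lam + real k) * kap t) = (\<Sum>n. h n t)" for t
  proof (cases "t > 0")
    case True
    have "(\<Sum>n. h n t) = (\<Sum>n. (t powr (lam - 1) * exp (- (x * t)) * (1 - exp (- t)) ^ Suc k) * (S n * exp (- t) ^ n))"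
    proof (rule suminf_cong)
      fix n
      have "exp (- ((x + real n) * t)) = exp (- (x * t)) * exp (- t) ^ n"
        by (simp add: exp_of_nat_mult[symmetric] mult_exp_exp algebra_simps)
      then show "h n t = (t powr (lam - 1) * exp (- (x * t)) * (1 - exp (- t)) ^ Suc k) * (S n * exp (- t) ^ n)"
        using True by (simp add: h_def)
    qed
    also have "\<dots> = (t powr (lam - 1) * exp (- (x * t)) * (1 - exp (- t)) ^ Suc k) * (\<Sum>n. S n * exp (- t) ^ n)"
      by (rule suminf_mult[OF gen_fun(1)[OF True]])
    also have "\<dots> = exp (- x * t) * t powr (lam + real k) * kap t"
    proof -
      have "t powr (lam - 1) * t ^ Suc k = t powr (lam - 1) * t powr (real (Suc k))"
        using powr_realpow[OF True, of "Suc k"] by simp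
      also have "\<dots> = t powr (lam - 1 + real (Suc k))" by (rule powr_add[symmetric])
      also have "\<dots> = t powr (lam + real k)" by simp
      finally have "t powr (lam + real k) = t powr (lam - 1) * t ^ Suc k" by simp
      then show ?thesis using True unfolding kap_def A_eq(1)[OF True]
        by (simp add: field_simps)
    qed
    finally show ?thesis using True by simp
  next
    case False
    then show ?thesis by (simp add: h_def)
  qed
  have summ_h: "AE t in lborel. summable (\<lambda>n. norm (h n t))"
  proof (intro AE_I2)
    fix t :: real
    show "summable (\<lambda>n. norm (h n t))"
    proof (cases "t > 0")
      case True
      have "summable (\<lambda>n. (t powr (lam - 1) * exp (- (x * t)) * (1 - exp (- t)) ^ Suc k) * (S n * exp (- t) ^ n))"
        by (intro summable_mult gen_fun(1)[OF True])
      moreover have "norm (h n t) = (t powr (lam - 1) * exp (- (x * t)) * (1 - exp (- t)) ^ Suc k) * (S n * exp (- t) ^ n)" for n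
      proof -
        have "exp (- ((x + real n) * t)) = exp (- (x * t)) * exp (- t) ^ n"
          by (simp add: exp_of_nat_mult[symmetric] mult_exp_exp algebra_simps)
        then show ?thesis using True hnn[of n t] by (simp add: h_def)
      qed
      ultimately show ?thesis by simp
    next
      case False
      then show ?thesis by (simp add: h_def)
    qed
  qed
  have summ_I: "summable (\<lambda>n. \<integral>t. norm (h n t) \<partial>lborel)"
    unfolding hI by (intro summable_mult summable_top x)
  show "integrable lborel (\<lambda>t. indicator {0<..} t * (exp (- x * t) * t powr (lam + real k) * kap t))"
    unfolding eq by (rule integrable_suminf[OF hint summ_h summ_I])
  have "(\<integral>t. (\<Sum>n. h n t) \<partial>lborel) = (\<Sum>n. integral\<^sup>L lborel (h n))"
    by (rule integral_suminf[OF hint summ_h summ_I])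
  also have "\<dots> = (\<Sum>n. Gamma lam * (S n * WW lam x (Suc k) n))"
    using hI hnn by simp
  also have "\<dots> = Gamma lam * (\<Sum>n. S n * WW lam x (Suc k) n)"
    by (intro suminf_mult summable_top x)
  finally show "(\<integral>t. indicator {0<..} t * (exp (- x * t) * t powr (lam + real k) * kap t) \<partial>lborel)
         = Gamma lam * (\<Sum>n. S n * WW lam x (Suc k) n)" unfolding eq .
qed

end


lemma Dk_nonneg: "Dk k y \<ge> 0" using Dk_props by blast

lemma Dk_nonpos: "y \<le> 0 \<Longrightarrow> Dk k y = 0"
  unfolding Dk_def by (rule nab_tp_nonpos)

lemma laplace_Dk_nn:
  fixes t :: real assumes t: "t > 0"
  shows "(\<integral>\<^sup>+u. ennreal (exp (- (u * t)) * Dk k u) \<partial>lborel) = ennreal ((1 - exp (- t)) ^ Suc k / t ^ Suc k)"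
proof -
  have "integrable lborel (\<lambda>u. exp (- (u * t)) * Dk k u)"
    and "(\<integral>u. exp (- (u * t)) * Dk k u \<partial>lborel) = (1 - exp (- t)) ^ Suc k / t ^ Suc k"
    using laplace_nab[OF t, of "Suc k" k] unfolding Dk_def by auto
  then show ?thesis
    by (subst nn_integral_eq_integral) (auto intro!: AE_I2 mult_nonneg_nonneg Dk_nonneg)
qed

lemma laplace_Dk_shift_nn:
  fixes t :: real assumes t: "t > 0"
  shows "(\<integral>\<^sup>+s. ennreal (exp (- (s * t)) * Dk k (s - real n)) \<partial>lborel)
      = ennreal (exp (- (real n * t)) * ((1 - exp (- t)) ^ Suc k / t ^ Suc k))"
proof -
  have "(\<integral>\<^sup>+s. ennreal (exp (- (s * t)) * Dk k (s - real n)) \<partial>lborel)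
      = ennreal \<bar>1\<bar> * (\<integral>\<^sup>+u. ennreal (exp (- ((real n + 1 * u) * t)) * Dk k ((real n + 1 * u) - real n)) \<partial>lborel)"
    by (rule nn_integral_real_affine) auto
  also have "\<dots> = (\<integral>\<^sup>+u. ennreal (exp (- ((real n + 1 * u) * t)) * Dk k ((real n + 1 * u) - real n)) \<partial>lborel)"
    by (simp only: abs_one ennreal_1 mult.left_neutral)
  also have "\<dots> = (\<integral>\<^sup>+u. ennreal (exp (- (real n * t))) * ennreal (exp (- (u * t)) * Dk k u) \<partial>lborel)"
  proof (intro nn_integral_cong)
    fix u :: real
    have "exp (- ((real n + 1 * u) * t)) = exp (- (real n * t)) * exp (- (u * t))"
      by (simp add: mult_exp_exp algebra_simps)
    then show "ennreal (exp (- ((real n + 1 * u) * t)) * Dk k ((real n + 1 * u) - real n))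
        = ennreal (exp (- (real n * t))) * ennreal (exp (- (u * t)) * Dk k u)"
      by (simp add: ennreal_mult'[symmetric] mult.assoc)
  qed
  also have "\<dots> = ennreal (exp (- (real n * t))) * (\<integral>\<^sup>+u. ennreal (exp (- (u * t)) * Dk k u) \<partial>lborel)"
    by (rule nn_integral_cmult) measurable
  also have "\<dots> = ennreal (exp (- (real n * t)) * ((1 - exp (- t)) ^ Suc k / t ^ Suc k))"
    unfolding laplace_Dk_nn[OF t] by (simp add: ennreal_mult'[symmetric])
  finally show ?thesis .
qed

context P6 begin

definition "gg t = pochhammer lam (Suc k) * (\<Sum>n. S n * Dk k (t - real n))"

lemma poch_pos: "pochhammer lam (Suc k) > 0"
  using lam_pos by (rule pochhammer_pos)

lemma gsum:
  assumes "real N \<ge> t"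
  shows "(\<Sum>n. S n * Dk k (t - real n)) = (\<Sum>n<N. S n * Dk k (t - real n))"
proof (rule suminf_finite)
  fix n assume "n \<notin> {..<N}"
  then have "t - real n \<le> 0" using assms by auto
  then show "S n * Dk k (t - real n) = 0" by (simp add: Dk_nonpos)
qed simp

lemma gsummable: "summable (\<lambda>n. S n * Dk k (t - real n))"
proof (rule summable_finite)
  fix n assume "n \<notin> {..<nat \<lceil>t\<rceil>}"
  then have "nat \<lceil>t\<rceil> \<le> n" by (simp only: lessThan_iff not_less)
  then have "real (nat \<lceil>t\<rceil>) \<le> real n" by (simp only: of_nat_le_iff)
  with real_nat_ceiling_ge[of t] have "t - real n \<le> 0" by linarith
  then show "S n * Dk k (t - real n) = 0" by (simp add: Dk_nonpos)
qed simp

lemma gg_nonneg: "gg t \<ge> 0"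
  unfolding gg_def using poch_pos S_nonneg Dk_nonneg
  by (intro mult_nonneg_nonneg suminf_nonneg gsummable) (auto intro: less_imp_le)

lemma gg_nonpos: "t \<le> 0 \<Longrightarrow> gg t = 0"
  unfolding gg_def using gsum[of t 0] by simp

lemma gg_measurable[measurable]: "gg \<in> borel_measurable borel"
  unfolding gg_def[abs_def] by measurable

lemma g_eq: "pochhammer lam (k + 1) / fact k * (\<Sum>n | real n < t. a n * (t - real n) ^ k) = gg t"
proof -
  define N where "N = nat \<lceil>t\<rceil>"
  have set: "{n. real n < t} = {..<N}" unfolding N_def by (auto; linarith)
  have lt: "n < N \<longleftrightarrow> real n < t" for n using set by blast
  have tN: "t \<le> real N" unfolding N_def by (rule real_nat_ceiling_ge)
  have "(\<Sum>n | real n < t. a n * (t - real n) ^ k) / fact k = (\<Sum>n<N. a n * tp k (t - real n))"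
    unfolding set sum_divide_distrib
    by (intro sum.cong refl) (auto simp: tp_def lt)
  also have "\<dots> = (\<Sum>n<Suc N. a n * tp k (t - real n))"
    using tN by (simp add: tp_def)
  also have "\<dots> = (\<Sum>n<Suc N. S n * (nab ^^ Suc k) (tp k) (t - real n))"
    by (rule iter_level) (rule nab_tp_nonpos, use tN in simp)
  also have "\<dots> = (\<Sum>n. S n * Dk k (t - real n))"
    by (subst gsum[of t "Suc N"]) (use tN in \<open>auto simp: Dk_def\<close>)
  finally show ?thesis unfolding gg_def by (simp add: field_simps)
qed

end


context P6 begin

lemma laplace_gg:
  assumes t: "t > 0"
  shows "(\<integral>\<^sup>+s. ennreal (exp (- (s * t)) * gg s) \<partial>lborel) = ennreal (pochhammer lam (Suc k) * kap t)"
proof -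
  define P where "P = pochhammer lam (Suc k)"
  define L where "L = (1 - exp (- t)) ^ Suc k / t ^ Suc k"
  have P0: "P > 0" using poch_pos by (simp add: P_def)
  have L0: "L \<ge> 0" using t by (simp add: L_def)
  define T where "T = (\<lambda>s n. P * S n * (exp (- (s * t)) * Dk k (s - real n)))"
  have Tnn: "T s n \<ge> 0" for s n
    unfolding T_def using P0 S_nonneg Dk_nonneg by (intro mult_nonneg_nonneg) (auto intro: less_imp_le)
  have Tsum: "summable (T s)" for s
  proof -
    have "summable (\<lambda>n. (P * exp (- (s * t))) * (S n * Dk k (s - real n)))"
      by (intro summable_mult gsummable)
    then show ?thesis unfolding T_def by (simp add: mult_ac)
  qed
  have pt: "ennreal (exp (- (s * t)) * gg s) = (\<Sum>n. ennreal (T s n))" for s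
  proof -
    have "exp (- (s * t)) * gg s = (P * exp (- (s * t))) * (\<Sum>n. S n * Dk k (s - real n))"
      unfolding gg_def P_def by (simp add: mult_ac)
    also have "\<dots> = (\<Sum>n. (P * exp (- (s * t))) * (S n * Dk k (s - real n)))"
      by (rule suminf_mult[OF gsummable, symmetric])
    also have "\<dots> = (\<Sum>n. T s n)" unfolding T_def by (simp add: mult_ac)
    finally show ?thesis using suminf_ennreal2[OF Tnn Tsum] by simp
  qed
  have "(\<integral>\<^sup>+s. ennreal (exp (- (s * t)) * gg s) \<partial>lborel) = (\<integral>\<^sup>+s. (\<Sum>n. ennreal (T s n)) \<partial>lborel)"
    by (simp add: pt)
  also have "\<dots> = (\<Sum>n. \<integral>\<^sup>+s. ennreal (T s n) \<partial>lborel)"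
    by (rule nn_integral_suminf) (simp add: T_def)
  also have "\<dots> = (\<Sum>n. ennreal (P * S n * (exp (- (real n * t)) * L)))"
  proof (rule suminf_cong)
    fix n
    have "(\<integral>\<^sup>+s. ennreal (T s n) \<partial>lborel) = (\<integral>\<^sup>+s. ennreal (P * S n) * ennreal (exp (- (s * t)) * Dk k (s - real n)) \<partial>lborel)"
      unfolding T_def using P0 S_nonneg[of n] by (intro nn_integral_cong) (simp add: ennreal_mult')
    also have "\<dots> = ennreal (P * S n) * (\<integral>\<^sup>+s. ennreal (exp (- (s * t)) * Dk k (s - real n)) \<partial>lborel)"
      by (rule nn_integral_cmult) measurable
    also have "\<dots> = ennreal (P * S n * (exp (- (real n * t)) * L))"
      unfolding laplace_Dk_shift_nn[OF t] L_def using P0 S_nonneg[of n]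
      by (simp add: ennreal_mult'[symmetric])
    finally show "(\<integral>\<^sup>+s. ennreal (T s n) \<partial>lborel) = ennreal (P * S n * (exp (- (real n * t)) * L))" .
  qed
  also have "\<dots> = ennreal (\<Sum>n. P * S n * (exp (- (real n * t)) * L))"
  proof (rule suminf_ennreal2)
    show "0 \<le> P * S n * (exp (- (real n * t)) * L)" for n
      using P0 S_nonneg L0 by (intro mult_nonneg_nonneg) (auto intro: less_imp_le)
    have e: "exp (- (real n * t)) = exp (- t) ^ n" for n by (simp add: exp_of_nat_mult[symmetric])
    have "summable (\<lambda>n. (P * L) * (S n * exp (- t) ^ n))"
      by (intro summable_mult gen_fun(1) t)
    then show "summable (\<lambda>n. P * S n * (exp (- (real n * t)) * L))"
      by (simp only: e) (simp add: mult_ac)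
  qed
  also have "(\<Sum>n. P * S n * (exp (- (real n * t)) * L)) = P * kap t"
  proof -
    have e: "exp (- (real n * t)) = exp (- t) ^ n" for n by (simp add: exp_of_nat_mult[symmetric])
    have "(\<Sum>n. P * S n * (exp (- (real n * t)) * L)) = (\<Sum>n. (P * L) * (S n * exp (- t) ^ n))"
      by (simp only: e) (simp add: mult_ac)
    also have "\<dots> = (P * L) * (\<Sum>n. S n * exp (- t) ^ n)"
      by (rule suminf_mult[OF gen_fun(1)[OF t]])
    also have "\<dots> = P * kap t"
      unfolding kap_def A_eq(1)[OF t] L_def by simp
    finally show ?thesis .
  qed
  finally show ?thesis by (simp add: P_def)
qed

end


context P6 begin

lemma stieltjes_nn:
  assumes x: "x > 0"
  shows "(\<integral>\<^sup>+s. ennreal (gg s * (1 / (x + s) powr (lam + real k + 1))) \<partial>lborel)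
       = ennreal (\<Sum>n. S n * WW lam x (Suc k) n)"
proof -
  define r where "r = lam + real k + 1"
  have r0: "r > 0" using lam_pos by (simp add: r_def)
  have Gr: "Gamma r > 0" using r0 by (simp add: Gamma_real_pos)
  have Gl: "Gamma lam > 0" using lam_pos by (simp add: Gamma_real_pos)
  define G where "G = (\<lambda>s t. ennreal (gg s * (indicator {0<..} t * t powr (r - 1) * exp (- ((x + s) * t))) / Gamma r))"
  have step1: "ennreal (gg s * (1 / (x + s) powr r)) = (\<integral>\<^sup>+t. G s t \<partial>lborel)" for s
  proof (cases "s > 0")
    case False
    then show ?thesis by (simp add: G_def gg_nonpos)
  next
    case True
    have "(\<integral>\<^sup>+t. G s t \<partial>lborel) = (\<integral>\<^sup>+t. ennreal (gg s / Gamma r) * ennreal (indicator {0<..} t * t powr (r - 1) * exp (- ((x + s) * t))) \<partial>lborel)"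
      unfolding G_def using gg_nonneg[of s] Gr
      by (intro nn_integral_cong) (simp add: ennreal_mult'[symmetric])
    also have "\<dots> = ennreal (gg s / Gamma r) * (\<integral>\<^sup>+t. ennreal (indicator {0<..} t * t powr (r - 1) * exp (- ((x + s) * t))) \<partial>lborel)"
      by (rule nn_integral_cmult) measurable
    also have "\<dots> = ennreal (gg s / Gamma r) * ennreal (Gamma r / (x + s) powr r)"
      using x True r0 by (subst gamma_nn) auto
    also have "\<dots> = ennreal (gg s * (1 / (x + s) powr r))"
      using gg_nonneg[of s] Gr by (simp add: ennreal_mult'[symmetric])
    finally show ?thesis by simp
  qed
  have "(\<integral>\<^sup>+s. ennreal (gg s * (1 / (x + s) powr r)) \<partial>lborel) = (\<integral>\<^sup>+s. (\<integral>\<^sup>+t. G s t \<partial>lborel) \<partial>lborel)"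
    by (rule nn_integral_cong, rule step1)
  also have "\<dots> = (\<integral>\<^sup>+t. (\<integral>\<^sup>+s. G s t \<partial>lborel) \<partial>lborel)"
    by (rule lborel_pair.Fubini'[symmetric]) (simp add: G_def)
  also have "\<dots> = (\<integral>\<^sup>+t. ennreal (indicator {0<..} t * (exp (- x * t) * t powr (lam + real k) * kap t) / Gamma lam) \<partial>lborel)"
  proof (rule nn_integral_cong)
    fix t :: real
    show "(\<integral>\<^sup>+s. G s t \<partial>lborel) = ennreal (indicator {0<..} t * (exp (- x * t) * t powr (lam + real k) * kap t) / Gamma lam)"
    proof (cases "t > 0")
      case False
      then show ?thesis by (simp add: G_def)
    next
      case True
      define c where "c = t powr (r - 1) * exp (- (x * t)) / Gamma r"
      have c0: "c \<ge> 0" using Gr by (simp add: c_def)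
      have "(\<integral>\<^sup>+s. G s t \<partial>lborel) = (\<integral>\<^sup>+s. ennreal c * ennreal (exp (- (s * t)) * gg s) \<partial>lborel)"
      proof (rule nn_integral_cong)
        fix s :: real
        have "exp (- ((x + s) * t)) = exp (- (x * t)) * exp (- (s * t))"
          by (simp add: mult_exp_exp algebra_simps)
        then have "gg s * (indicator {0<..} t * t powr (r - 1) * exp (- ((x + s) * t))) / Gamma r
            = c * (exp (- (s * t)) * gg s)"
          using True by (simp add: c_def)
        then show "G s t = ennreal c * ennreal (exp (- (s * t)) * gg s)"
          unfolding G_def using c0 by (simp add: ennreal_mult'[symmetric])
      qed
      also have "\<dots> = ennreal c * (\<integral>\<^sup>+s. ennreal (exp (- (s * t)) * gg s) \<partial>lborel)"
        by (rule nn_integral_cmult) measurable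
      also have "\<dots> = ennreal (c * (pochhammer lam (Suc k) * kap t))"
        unfolding laplace_gg[OF True] using c0 by (simp add: ennreal_mult'[symmetric])
      also have "c * (pochhammer lam (Suc k) * kap t) = indicator {0<..} t * (exp (- x * t) * t powr (lam + real k) * kap t) / Gamma lam"
      proof -
        have "pochhammer lam (Suc k) = Gamma r / Gamma lam"
        proof -
          have "lam \<notin> \<int>\<^sub>\<le>\<^sub>0" using lam_pos nonpos_Ints_nonpos by fastforce
          then show ?thesis unfolding r_def using pochhammer_Gamma[of lam "Suc k"] by (simp add: add_ac)
        qed
        moreover have "r - 1 = lam + real k" by (simp add: r_def)
        ultimately show ?thesis using True Gr Gl by (simp add: c_def)
      qed
      finally show ?thesis .
    qed
  qed
  also have "\<dots> = ennreal ((\<integral>t. indicator {0<..} t * (exp (- x * t) * t powr (lam + real k) * kap t) \<partial>lborel) / Gamma lam)"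
  proof -
    have "(\<integral>\<^sup>+t. ennreal (indicator {0<..} t * (exp (- x * t) * t powr (lam + real k) * kap t) / Gamma lam) \<partial>lborel)
      = ennreal (\<integral>t. indicator {0<..} t * (exp (- x * t) * t powr (lam + real k) * kap t) / Gamma lam \<partial>lborel)"
      using laplace_f(1)[OF x] Gl kap_nonneg
      by (intro nn_integral_eq_integral AE_I2) (auto simp: indicator_def)
    then show ?thesis by simp
  qed
  also have "\<dots> = ennreal (\<Sum>n. S n * WW lam x (Suc k) n)"
    unfolding laplace_f(2)[OF x] using Gl by simp
  finally show ?thesis by (simp add: r_def)
qed

end


definition LTr :: "(real \<Rightarrow> real) \<Rightarrow> nat \<Rightarrow> real \<Rightarrow> real" where
  "LTr G m t = (\<integral>s. s ^ m * exp (- (s * t)) * G s \<partial>lborel)"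

lemma expb: fixes u :: real shows "\<bar>exp (- u) - 1 + u\<bar> \<le> u\<^sup>2 * exp \<bar>u\<bar>"
proof -
  obtain th where th: "\<bar>th\<bar> \<le> \<bar>- u\<bar>" "exp (- u) = (\<Sum>m<2. (- u) ^ m / fact m) + exp th / fact 2 * (- u) ^ 2"
    using Maclaurin_exp_le[of "- u" 2] by blast
  have s: "(\<Sum>m<2. (- u) ^ m / fact m) = 1 - u" by (simp add: numeral_2_eq_2)
  have e: "exp (- u) - 1 + u = exp th / 2 * u\<^sup>2" using th(2) s by simp
  have nn: "0 \<le> exp th / 2 * u\<^sup>2" by simp
  have "exp th \<le> exp \<bar>u\<bar>" using th(1) by simp
  moreover have "exp th / 2 \<le> exp th" using exp_gt_zero[of th] by linarith
  ultimately have "exp th / 2 \<le> exp \<bar>u\<bar>" by linarith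
  then have le: "exp th / 2 * u\<^sup>2 \<le> u\<^sup>2 * exp \<bar>u\<bar>"
    using mult_right_mono[of "exp th / 2" "exp \<bar>u\<bar>" "u\<^sup>2"] by (simp add: mult.commute)
  show ?thesis unfolding e abs_of_nonneg[OF nn] by (rule le)
qed

locale LTloc =
  fixes G :: "real \<Rightarrow> real"
  assumes Gm[measurable]: "G \<in> borel_measurable borel"
    and Gnn: "\<And>s. G s \<ge> 0"
    and Gneg: "\<And>s. s < 0 \<Longrightarrow> G s = 0"
    and Gint: "\<And>t. t > 0 \<Longrightarrow> integrable lborel (\<lambda>s. exp (- (s * t)) * G s)"
begin

lemma LT_int:
  assumes t: "t > 0"
  shows "integrable lborel (\<lambda>s. s ^ m * exp (- (s * t)) * G s)"
proof (rule Bochner_Integration.integrable_bound)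
  define C where "C = fact m / (t/2) ^ m"
  show "integrable lborel (\<lambda>s. C * (exp (- (s * (t/2))) * G s))"
    using Gint[of "t/2"] t by simp
  show "AE s in lborel. norm (s ^ m * exp (- (s * t)) * G s) \<le> norm (C * (exp (- (s * (t/2))) * G s))"
  proof (intro AE_I2)
    fix s :: real
    show "norm (s ^ m * exp (- (s * t)) * G s) \<le> norm (C * (exp (- (s * (t/2))) * G s))"
    proof (cases "s < 0")
      case True then show ?thesis by (simp add: Gneg)
    next
      case False
      have "s ^ m \<le> C * exp (t/2 * s)" unfolding C_def using False t by (intro pow_le_exp) auto
      then have "s ^ m * exp (- (s * t)) \<le> C * exp (t/2 * s) * exp (- (s * t))" by (intro mult_right_mono) auto
      also have "\<dots> = C * exp (- (s * (t/2)))" by (simp add: mult.assoc mult_exp_exp field_simps)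
      finally have "s ^ m * exp (- (s * t)) * G s \<le> C * exp (- (s * (t/2))) * G s"
        using Gnn[of s] by (intro mult_right_mono) auto
      moreover have "0 \<le> s ^ m * exp (- (s * t)) * G s" using False Gnn[of s] by simp
      moreover have "0 \<le> C" using t by (auto simp: C_def intro!: divide_nonneg_nonneg)
      ultimately show ?thesis using Gnn[of s] by (simp add: mult.assoc)
    qed
  qed
qed measurable

lemma LT_nonneg: "LTr G m t \<ge> 0"
  unfolding LTr_def
proof (intro integral_nonneg_AE AE_I2)
  fix s :: real
  show "0 \<le> s ^ m * exp (- (s * t)) * G s"
    by (cases "s < 0") (auto simp: Gneg Gnn)
qed

lemma LT_deriv:
  assumes t: "t > 0"
  shows "(LTr G m has_real_derivative - LTr G (Suc m) t) (at t)"
proof -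
  define B where "B = LTr G (Suc (Suc m)) (t/2)"
  have key: "\<bar>(LTr G m y - LTr G m t) / (y - t) - (- LTr G (Suc m) t)\<bar> \<le> \<bar>y - t\<bar> * B"
    if y1: "\<bar>y - t\<bar> < t/2" and y2: "y \<noteq> t" for y
  proof -
    define h where "h = y - t"
    have y0: "y > 0" using y1 t by linarith
    have h0: "h \<noteq> 0" using y2 by (simp add: h_def)
    have i1: "integrable lborel (\<lambda>s. s ^ m * exp (- (s * y)) * G s)" by (rule LT_int[OF y0])
    have i2: "integrable lborel (\<lambda>s. s ^ m * exp (- (s * t)) * G s)" by (rule LT_int[OF t])
    have i3: "integrable lborel (\<lambda>s. h * (s ^ Suc m * exp (- (s * t)) * G s))"
      by (intro integrable_mult_right LT_int[OF t])
    have i4: "integrable lborel (\<lambda>s. h\<^sup>2 * (s ^ Suc (Suc m) * exp (- (s * (t/2))) * G s))"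
      using t by (intro integrable_mult_right LT_int) auto
    define F where "F = (\<lambda>s. s ^ m * exp (- (s * y)) * G s - s ^ m * exp (- (s * t)) * G s + h * (s ^ Suc m * exp (- (s * t)) * G s))"
    have iF: "integrable lborel F" unfolding F_def using i1 i2 i3 by auto
    have DF: "LTr G m y - LTr G m t + h * LTr G (Suc m) t = (\<integral>s. F s \<partial>lborel)"
      unfolding F_def LTr_def using i1 i2 i3 LT_int[OF t, of "Suc m"]
      by (simp add: Bochner_Integration.integral_add Bochner_Integration.integral_diff)
    have Fb: "norm (F s) \<le> h\<^sup>2 * (s ^ Suc (Suc m) * exp (- (s * (t/2))) * G s)" for s
    proof (cases "s < 0")
      case True then show ?thesis by (simp add: F_def Gneg)
    next
      case False
      have e: "exp (- (s * y)) = exp (- (s * t)) * exp (- (s * h))"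
        by (simp add: h_def mult_exp_exp algebra_simps)
      have "F s = s ^ m * G s * exp (- (s * t)) * (exp (- (s * h)) - 1 + s * h)"
        unfolding F_def e by (simp add: algebra_simps)
      then have "norm (F s) = s ^ m * G s * exp (- (s * t)) * \<bar>exp (- (s * h)) - 1 + s * h\<bar>"
        using False Gnn[of s] by (simp add: abs_mult)
      also have "\<dots> \<le> s ^ m * G s * exp (- (s * t)) * ((s * h)\<^sup>2 * exp \<bar>s * h\<bar>)"
        using False Gnn[of s] expb[of "s * h"] by (intro mult_left_mono) auto
      also have "\<dots> = h\<^sup>2 * (s ^ Suc (Suc m) * (exp (- (s * t)) * exp \<bar>s * h\<bar>) * G s)"
        by (simp add: power2_eq_square algebra_simps)
      also have "\<dots> \<le> h\<^sup>2 * (s ^ Suc (Suc m) * exp (- (s * (t/2))) * G s)"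
      proof -
        have "\<bar>s * h\<bar> = s * \<bar>h\<bar>" using False by (simp add: abs_mult)
        also have "\<dots> \<le> s * (t/2)" using False y1 by (intro mult_left_mono) (auto simp: h_def)
        finally have "\<bar>s * h\<bar> \<le> s * (t/2)" .
        then have "exp (- (s * t)) * exp \<bar>s * h\<bar> \<le> exp (- (s * (t/2)))"
          by (simp add: mult_exp_exp)
        then show ?thesis using False Gnn[of s]
          by (intro mult_left_mono mult_right_mono) auto
      qed
      finally show ?thesis .
    qed
    have "\<bar>LTr G m y - LTr G m t + h * LTr G (Suc m) t\<bar> \<le> (\<integral>s. h\<^sup>2 * (s ^ Suc (Suc m) * exp (- (s * (t/2))) * G s) \<partial>lborel)"
      unfolding DF using Bochner_Integration.integral_norm_bound_integral[OF iF i4] Fb by simp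
    also have "\<dots> = h\<^sup>2 * B" unfolding B_def LTr_def by simp
    finally have "\<bar>LTr G m y - LTr G m t + h * LTr G (Suc m) t\<bar> \<le> h\<^sup>2 * B" .
    moreover have "(LTr G m y - LTr G m t) / (y - t) - (- LTr G (Suc m) t) = (LTr G m y - LTr G m t + h * LTr G (Suc m) t) / h"
      using h0 by (simp add: h_def field_simps)
    ultimately show ?thesis using h0
      by (simp add: abs_divide divide_le_eq power2_eq_square h_def abs_mult mult_ac)
  qed
  have "((\<lambda>y. (LTr G m y - LTr G m t) / (y - t) - (- LTr G (Suc m) t)) \<longlongrightarrow> 0) (at t)"
  proof (rule Lim_null_comparison)
    show "\<forall>\<^sub>F y in at t. norm ((LTr G m y - LTr G m t) / (y - t) - (- LTr G (Suc m) t)) \<le> \<bar>y - t\<bar> * B"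
      unfolding eventually_at
    proof (intro exI[of _ "t/2"] conjI ballI impI)
      show "t/2 > 0" using t by simp
      fix y :: real assume "y \<in> UNIV" "y \<noteq> t \<and> dist y t < t/2"
      then show "norm ((LTr G m y - LTr G m t) / (y - t) - (- LTr G (Suc m) t)) \<le> \<bar>y - t\<bar> * B"
        using key[of y] by (simp add: dist_real_def)
    qed
    have "((\<lambda>y. \<bar>y - t\<bar> * B) \<longlongrightarrow> \<bar>t - t\<bar> * B) (at t)"
      by (intro tendsto_intros)
    then show "((\<lambda>y. \<bar>y - t\<bar> * B) \<longlongrightarrow> 0) (at t)" by simp
  qed
  then show ?thesis
    unfolding has_field_derivative_iff by (rule LIM_zero_iff[THEN iffD1])
qed

lemma deriv_funpow_LT:
  assumes t: "t > 0"
  shows "(deriv ^^ m) (LTr G 0) t = (-1) ^ m * LTr G m t"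
  using t
proof (induction m arbitrary: t)
  case 0 then show ?case by simp
next
  case (Suc m)
  have ev: "eventually (\<lambda>u. (deriv ^^ m) (LTr G 0) u = (-1) ^ m * LTr G m u) (nhds t)"
    unfolding eventually_nhds using Suc.prems by (intro exI[of _ "{0<..}"]) (auto intro: Suc.IH)
  have "(deriv ^^ Suc m) (LTr G 0) t = deriv ((deriv ^^ m) (LTr G 0)) t" by simp
  also have "\<dots> = deriv (\<lambda>u. (-1) ^ m * LTr G m u) t"
    by (rule deriv_cong_ev[OF ev refl])
  also have "\<dots> = (-1) ^ m * (- LTr G (Suc m) t)"
    by (intro DERIV_imp_deriv DERIV_cmult LT_deriv Suc.prems)
  finally show ?case by simp
qed

lemma cm_transfer:
  assumes eq: "\<And>t. t > 0 \<Longrightarrow> F t = LTr G 0 t"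
  shows "completely_monotonic_on {0<..} F"
proof -
  have deq: "(deriv ^^ m) F t = (deriv ^^ m) (LTr G 0) t" if "t > 0" for m t
    using that
  proof (induction m arbitrary: t)
    case 0 then show ?case using eq by simp
  next
    case (Suc m)
    have ev: "eventually (\<lambda>u. (deriv ^^ m) F u = (deriv ^^ m) (LTr G 0) u) (nhds t)"
      unfolding eventually_nhds using Suc.prems by (intro exI[of _ "{0<..}"]) (auto intro: Suc.IH)
    show ?case by (simp add: deriv_cong_ev[OF ev refl])
  qed
  have D: "((deriv ^^ m) F has_real_derivative (-1) ^ m * (- LTr G (Suc m) t)) (at t)" if t: "t > 0" for m t
  proof (rule has_field_derivative_transform_within_open[of "\<lambda>u. (-1) ^ m * LTr G m u" _ _ "{0<..}"])
    show "((\<lambda>u. (-1) ^ m * LTr G m u) has_real_derivative (-1) ^ m * (- LTr G (Suc m) t)) (at t)"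
      by (intro DERIV_cmult LT_deriv t)
    show "(-1) ^ m * LTr G m u = (deriv ^^ m) F u" if "u \<in> {0<..}" for u
      using that by (simp add: deq deriv_funpow_LT)
  qed (use t in auto)
  show ?thesis unfolding completely_monotonic_on_def
  proof (intro conjI allI ballI)
    fix m and t :: real assume "t \<in> {0<..}"
    then have t: "t > 0" by simp
    show "(deriv ^^ m) F differentiable (at t)"
      using D[OF t, of m] by (auto simp: real_differentiable_def)
    have "(-1) ^ m * (deriv ^^ m) F t = (-1) ^ m * ((-1) ^ m * LTr G m t)"
      using t by (simp add: deq deriv_funpow_LT)
    also have "\<dots> = LTr G m t" by (simp flip: power_mult_distrib)
    finally show "0 \<le> (-1) ^ m * (deriv ^^ m) F t" using LT_nonneg by simp
  qed
qed

end


theorem proposition6p2: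
  fixes lam :: real and a :: "nat \<Rightarrow> real" and k :: nat
  assumes lam_pos: "lam > 0"
    and nonneg: "\<forall>n. iter_psum a k n \<ge> 0"
    and lim: "(\<lambda>n. iter_psum a k n / real n powr lam) \<longlonglongrightarrow> 0"
    and summ: "summable (\<lambda>n. iter_psum a k (Suc n) / real (Suc n) powr (1 + lam))"
  defines "f \<equiv> (\<lambda>x. \<Sum>n. a n / (x + real n) powr lam)"
    and "g \<equiv> (\<lambda>t. pochhammer lam (k + 1) / fact k *
                   (\<Sum>n | real n < t. a n * (t - real n) ^ k))"
    and "\<kappa> \<equiv> (\<lambda>t. (\<Sum>n. a n * exp (- real n * t)) / t ^ (k + 1))"
  shows "(\<forall>x>0. summable (\<lambda>n. a n / (x + real n) powr lam))
    \<and> gen_stieltjes (lam + real k + 1) f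
    \<and> (AE t in lborel. g t \<ge> 0)
    \<and> (\<forall>x>0. integrable (density lborel (\<lambda>t. ennreal (g t)))
                   (\<lambda>t. 1 / (x + t) powr (lam + real k + 1))
           \<and> f x = (\<integral>t. 1 / (x + t) powr (lam + real k + 1)
                       \<partial>(density lborel (\<lambda>t. ennreal (g t)))))
    \<and> (\<forall>t>0. summable (\<lambda>n. a n * exp (- real n * t)))
    \<and> (\<forall>x>0. set_integrable lborel {0<..} (\<lambda>t. exp (- x * t) * t powr (lam + real k) * \<kappa> t)
           \<and> f x = 1 / Gamma lam *
               (LBINT t:{0<..}. exp (- x * t) * t powr (lam + real k) * \<kappa> t))
    \<and> completely_monotonic_on {0<..} \<kappa>"
proof -
  interpret P6 lam a k
    using lam_pos nonneg lim summ by unfold_locales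
  have g_gg: "g = gg" unfolding g_def by (rule ext) (rule g_eq)
  have k_kap: "\<kappa> = kap" unfolding \<kappa>_def by (rule ext) (simp add: kap_def)
  have f_eq: "f x = (\<Sum>n. S n * WW lam x (Suc k) n)" if x: "x > 0" for x
    unfolding f_def using f_sums[OF x] by (simp add: sums_iff)
  have f_nn: "(\<Sum>n. S n * WW lam x (Suc k) n) \<ge> 0" if x: "x > 0" for x
    using S_nonneg WW_nonneg_le(1)[OF lam_pos x] summable_top[OF x]
    by (intro suminf_nonneg) auto
  have Gl: "Gamma lam > 0" using lam_pos by (simp add: Gamma_real_pos)
  have C1: "\<forall>x>0. summable (\<lambda>n. a n / (x + real n) powr lam)"
    using f_sums sums_summable by blast
  have C4: "integrable (density lborel (\<lambda>t. ennreal (g t))) (\<lambda>t. 1 / (x + t) powr (lam + real k + 1))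
           \<and> f x = (\<integral>t. 1 / (x + t) powr (lam + real k + 1) \<partial>(density lborel (\<lambda>t. ennreal (g t))))"
    if x: "x > 0" for x
  proof -
    have nnI: "integrable lborel (\<lambda>s. gg s * (1 / (x + s) powr (lam + real k + 1)))
        \<and> (\<integral>s. gg s * (1 / (x + s) powr (lam + real k + 1)) \<partial>lborel) = (\<Sum>n. S n * WW lam x (Suc k) n)"
      using stieltjes_nn[OF x] f_nn[OF x] gg_nonneg
      by (subst (asm) nn_integral_eq_integrable) (auto intro!: AE_I2)
    have i: "integrable (density lborel (\<lambda>t. ennreal (gg t))) (\<lambda>t. 1 / (x + t) powr (lam + real k + 1))"
      using nnI gg_nonneg by (subst integrable_density) auto
    have e: "(\<integral>t. 1 / (x + t) powr (lam + real k + 1) \<partial>(density lborel (\<lambda>t. ennreal (gg t))))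
        = (\<Sum>n. S n * WW lam x (Suc k) n)"
      using nnI gg_nonneg by (subst integral_density) auto
    show ?thesis unfolding g_gg using i e f_eq[OF x] by simp
  qed
  have C2: "gen_stieltjes (lam + real k + 1) f"
    unfolding gen_stieltjes_def
  proof (intro exI[of _ "density lborel (\<lambda>t. ennreal (g t))"] exI[of _ 0] conjI allI impI)
    show "sets (density lborel (\<lambda>t. ennreal (g t))) = sets borel" by simp
    show "emeasure (density lborel (\<lambda>t. ennreal (g t))) {..<0} = 0"
    proof -
      have "emeasure (density lborel (\<lambda>t. ennreal (gg t))) {..<0} = (\<integral>\<^sup>+x. ennreal (gg x) * indicator {..<0} x \<partial>lborel)"
        by (rule emeasure_density) auto
      also have "\<dots> = 0"
      proof -
        have z: "ennreal (gg x) * indicator {..<0} x = 0" for x by (auto simp: gg_nonpos indicator_def)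
        show ?thesis by (simp only: z) simp
      qed
      finally show ?thesis unfolding g_gg .
    qed
    fix x :: real assume x: "x > 0"
    show "integrable (density lborel (\<lambda>t. ennreal (g t))) (\<lambda>t. 1 / (x + t) powr (lam + real k + 1))"
      using C4[OF x] by simp
    show "f x = (\<integral>t. 1 / (x + t) powr (lam + real k + 1) \<partial>density lborel (\<lambda>t. ennreal (g t))) + 0"
      using C4[OF x] by simp
  qed simp
  have C3: "AE t in lborel. g t \<ge> 0" unfolding g_gg using gg_nonneg by simp
  have C5: "\<forall>t>0. summable (\<lambda>n. a n * exp (- real n * t))" using A_eq(2) by blast
  have C6: "set_integrable lborel {0<..} (\<lambda>t. exp (- x * t) * t powr (lam + real k) * \<kappa> t)
           \<and> f x = 1 / Gamma lam * (LBINT t:{0<..}. exp (- x * t) * t powr (lam + real k) * \<kappa> t)"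
    if x: "x > 0" for x
    unfolding k_kap set_integrable_def set_lebesgue_integral_def
    using laplace_f[OF x] f_eq[OF x] Gl by simp
  have C7: "completely_monotonic_on {0<..} \<kappa>"
  proof -
    define P where "P = pochhammer lam (Suc k)"
    have P0: "P > 0" using poch_pos by (simp add: P_def)
    have lapI: "integrable lborel (\<lambda>s. exp (- (s * t)) * gg s)
        \<and> (\<integral>s. exp (- (s * t)) * gg s \<partial>lborel) = P * kap t" if t: "t > 0" for t
      using laplace_gg[OF t] P0 kap_nonneg[OF t] gg_nonneg unfolding P_def
      by (subst (asm) nn_integral_eq_integrable) (auto intro!: AE_I2)
    interpret LTloc "\<lambda>s. gg s / P"
    proof
      show "(\<lambda>s. gg s / P) \<in> borel_measurable borel" by measurable
      show "0 \<le> gg s / P" for s using gg_nonneg P0 by simp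
      show "s < 0 \<Longrightarrow> gg s / P = 0" for s by (simp add: gg_nonpos)
      fix t :: real assume t: "t > 0"
      have "integrable lborel (\<lambda>s. (exp (- (s * t)) * gg s) / P)"
        using lapI[OF t] by auto
      then show "integrable lborel (\<lambda>s. exp (- (s * t)) * (gg s / P))" by simp
    qed
    show ?thesis unfolding k_kap
    proof (rule cm_transfer)
      fix t :: real assume t: "t > 0"
      have "LTr (\<lambda>s. gg s / P) 0 t = (\<integral>s. (exp (- (s * t)) * gg s) / P \<partial>lborel)"
        unfolding LTr_def by simp
      also have "\<dots> = kap t" using lapI[OF t] P0 by simp
      finally show "kap t = LTr (\<lambda>s. gg s / P) 0 t" by simp
    qed
  qed
  show ?thesis using C1 C2 C3 C4 C5 C6 C7 by blast
qed


end
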